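(* Define $A_0:=1$ and, for integers $m\ge1$, $A_m:=\frac{1\cdot3\cdot5\cdots(2m-1)}{m!}=\frac{(2m)!}{2^m(m!)^2}$. For integers $m,n\ge0$ and $0\le r\le\min(m,n)$ set $$A_{m,n}^r:=\frac{A_{m-r}A_rA_{n-r}}{A_{n+m-r}}\cdot\frac{2n+2m-4r+1}{2n+2m-2r+1},\qquad B_{m,n}^r:=\frac{\sqrt{(2m+1)(2n+1)}}{2m+2n-4r+1}\,A_{m,n}^r .$$ Then there is a constant $C>0$ such that $B_{m,n}^r\le C$ for all integers $m,n\ge0$ and all $0\le r\le\min(m,n)$. *)

theory Defs
  imports Complex_Main
begin

definition A :: "nat \<Rightarrow> real" where
  "A m = fact (2*m) / (2^m * (fact m)^2)"

definition Amn :: "nat \<Rightarrow> nat \<Rightarrow> nat \<Rightarrow> real" where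
  "Amn m n r = (A (m - r) * A r * A (n - r) / A (n + m - r)) *
     ((2*real n + 2*real m - 4*real r + 1) / (2*real n + 2*real m - 2*real r + 1))"

definition Bmn :: "nat \<Rightarrow> nat \<Rightarrow> nat \<Rightarrow> real" where
  "Bmn m n r = sqrt ((2*real m + 1) * (2*real n + 1)) / (2*real m + 2*real n - 4*real r + 1) * Amn m n r"

end

theory Submission
  imports Defs
begin

lemma A_pos: "A k > 0"
  unfolding A_def by simp

lemma aux1:
  fixes F G p x :: real assumes "p > 0" "G > 0" "x \<ge> 0"
  shows "(2*x+2)*(2*x+1)*F / (2*p*((x+1)*G)^2) = F/(p*G^2)*(2*x+1)/(x+1)"
proof -
  have c: "2*(x+1) \<noteq> 0" using assms by auto
  have e1: "(2*x+2)*(2*x+1)*F = ((2*x+1)*F) * (2*(x+1))" by (simp add: algebra_simps)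
  have e2: "2*p*((x+1)*G)^2 = (p*G^2*(x+1)) * (2*(x+1))" by (simp add: algebra_simps power2_eq_square)
  have "(2*x+2)*(2*x+1)*F / (2*p*((x+1)*G)^2) = ((2*x+1)*F) / (p*G^2*(x+1))"
    unfolding e1 e2 using c by (rule mult_divide_mult_cancel_right)
  also have "\<dots> = F/(p*G^2)*(2*x+1)/(x+1)" by (simp add: algebra_simps)
  finally show ?thesis .
qed

lemma aux2:
  fixes P x :: real assumes "x \<ge> 0"
  shows "(P*(2*x+1)/(2*x+2))^2 * (4*(x+1)+1) = (P^2*(4*x+1)) * ((2*x+1)^2*(4*x+5)/((2*x+2)^2*(4*x+1)))"
proof -
  have a: "4*x+1 \<noteq> 0" "(2*x+2)^2 \<noteq> 0" using assms by auto
  have "(P^2*(4*x+1)) * ((2*x+1)^2*(4*x+5)/((2*x+2)^2*(4*x+1)))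
      = (P^2*(2*x+1)^2*(4*x+5)*(4*x+1)) / ((2*x+2)^2*(4*x+1))" by (simp add: algebra_simps)
  also have "\<dots> = (P^2*(2*x+1)^2*(4*x+5)) / (2*x+2)^2"
    using a(1) by (rule mult_divide_mult_cancel_right)
  also have "\<dots> = (P^2*(2*x+1)^2/(2*x+2)^2) * (4*(x+1)+1)"
    by (simp only: times_divide_eq_left) (simp add: distrib_left)
  also have "\<dots> = (P*(2*x+1)/(2*x+2))^2 * (4*(x+1)+1)"
    by (simp only: power_mult_distrib power_divide)
  finally show ?thesis by simp
qed

lemma A_Suc: "A (Suc k) = A k * (2*real k + 1) / (real k + 1)"
proof -
  have f1: "fact (2 * Suc k) = (2*real k + 2) * (2*real k + 1) * (fact (2*k) :: real)"
    by (simp add: algebra_simps)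
  have f2: "(fact (Suc k) :: real) = (real k + 1) * fact k"
    by (simp add: algebra_simps)
  have p: "(2::real)^Suc k = 2 * 2^k" by simp
  have g: "(fact k :: real) > 0" by simp
  have k: "real k + 1 > 0" by simp
  show ?thesis unfolding A_def f1 f2 p using g k
    using aux1[of "2^k" "fact k" "real k" "fact (2*k)"] by (simp add: power_mult_distrib)
qed

definition P :: "nat \<Rightarrow> real" where "P k = A k / 2^k"

lemma P_pos: "P k > 0" unfolding P_def using A_pos by simp

lemma P_Suc: "P (Suc k) = P k * (2*real k + 1) / (2*real k + 2)"
  unfolding P_def A_Suc by (simp add: field_simps)

lemma P_upper: "P k ^ 2 * (2*real k + 1) \<le> 1"
proof (induction k)
  case 0 then show ?case by (simp add: P_def A_def)
next
  case (Suc k)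
  have e: "P (Suc k) ^ 2 * (2*real (Suc k) + 1)
       = (P k ^ 2 * (2*real k + 1)) * ((2*real k + 1) * (2*real k + 3) / (2*real k + 2)^2)"
    unfolding P_Suc by (simp add: field_simps power2_eq_square)
  have q0: "(2*real k + 1) * (2*real k + 3) \<le> (2*real k + 2)^2"
    by (simp add: power2_eq_square algebra_simps)
  have q: "(2*real k + 1) * (2*real k + 3) / (2*real k + 2)^2 \<le> 1"
    using q0 by (simp add: divide_le_eq)
  have "0 \<le> P k ^ 2 * (2*real k + 1)" by simp
  then have "(P k ^ 2 * (2*real k + 1)) * ((2*real k + 1) * (2*real k + 3) / (2*real k + 2)^2) \<le> 1 * 1"
    using Suc.IH q by (intro mult_mono) auto
  then show ?case using e by simp
qed

lemma P_lower: "P k ^ 2 * (4*real k + 1) \<ge> 1"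
proof (induction k)
  case 0 then show ?case by (simp add: P_def A_def)
next
  case (Suc k)
  have nz: "4*real k + 1 \<noteq> 0" "2*real k + 2 \<noteq> 0" by linarith+
  have e: "P (Suc k) ^ 2 * (4*real (Suc k) + 1)
       = (P k ^ 2 * (4*real k + 1)) * ((2*real k + 1)^2 * (4*real k + 5) / ((2*real k + 2)^2 * (4*real k + 1)))"
    unfolding P_Suc using aux2[of "real k" "P k"] by simp
  have q0: "(2*real k + 2)^2 * (4*real k + 1) \<le> (2*real k + 1)^2 * (4*real k + 5)"
    by (simp add: power2_eq_square algebra_simps)
  have q1: "(2*real k + 2)^2 * (4*real k + 1) > 0" by simp
  have q: "(2*real k + 1)^2 * (4*real k + 5) / ((2*real k + 2)^2 * (4*real k + 1)) \<ge> 1"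
    using q0 q1 by (simp add: le_divide_eq)
  have "1 * 1 \<le> (P k ^ 2 * (4*real k + 1)) * ((2*real k + 1)^2 * (4*real k + 5) / ((2*real k + 2)^2 * (4*real k + 1)))"
    using Suc.IH q by (intro mult_mono) auto
  then show ?case using e by simp
qed

lemma aux3: fixes s d1 d2 q :: real assumes "d1 \<noteq> 0"
  shows "s / d1 * (q * (d1 / d2)) = s * (q / d2)"
  using assms by (simp add: field_simps)

lemma B_form:
  "Bmn (a+r) (b+r) r = sqrt ((2*real (a+r) + 1) * (2*real (b+r) + 1)) *
     (P a * P r * P b / (P (a+b+r) * (2*real (a+b+r) + 1)))"
proof -
  have d1: "2*real (a+r) + 2*real (b+r) - 4*real r + 1 = 2*real a + 2*real b + 1" by simp
  have d1': "2*real (b+r) + 2*real (a+r) - 4*real r + 1 = 2*real a + 2*real b + 1" by simp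
  have d2: "2*real (b+r) + 2*real (a+r) - 2*real r + 1 = 2*real (a+b+r) + 1" by simp
  have i1: "b + r + (a + r) - r = a+b+r" by simp
  have i2: "a + r - r = a" "b + r - r = b" by simp_all
  have pa: "A a = 2^a * P a" "A r = 2^r * P r" "A b = 2^b * P b" "A (a+b+r) = 2^(a+b+r) * P (a+b+r)"
    unfolding P_def by simp_all
  have pw: "(2::real)^(a+b+r) = 2^a * 2^r * 2^b" by (simp add: power_add)
  have q: "A a * A r * A b / A (a+b+r) = P a * P r * P b / P (a+b+r)"
    unfolding pa pw using P_pos[of "a+b+r"] by (simp add: field_simps)
  have nz: "(2*real a + 2*real b + 1) \<noteq> 0" by simp
  have "Bmn (a+r) (b+r) r = sqrt ((2*real (a+r) + 1) * (2*real (b+r) + 1)) / (2*real a + 2*real b + 1)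
     * ((P a * P r * P b / P (a+b+r)) * ((2*real a + 2*real b + 1) / (2*real (a+b+r) + 1)))"
    unfolding Bmn_def Amn_def d1 d1' d2 i1 i2 q ..
  also have "\<dots> = sqrt ((2*real (a+r) + 1) * (2*real (b+r) + 1)) *
     ((P a * P r * P b / P (a+b+r)) / (2*real (a+b+r) + 1))"
    using nz by (rule aux3)
  finally show ?thesis by simp
qed

lemma aux_r: fixes r N :: real assumes "0 \<le> r" "r \<le> N"
  shows "(2*r+1) * (4*N + 1) \<le> 4 * (2*N+1)^2"
proof -
  have "(2*r+1) * (4*N + 1) \<le> (2*N+1) * (4*N + 1)"
    using assms by (intro mult_right_mono) auto
  also have "\<dots> \<le> 4 * (2*N+1)^2" using assms by (simp add: power2_eq_square algebra_simps)
  finally show ?thesis .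
qed

lemma aux_fin: fixes M x y z w a b r N :: real
  assumes "0 \<le> a" "0 \<le> b" "0 \<le> r" "r \<le> N"
    "M \<le> ((2*a+1)*(2*r+1)) * ((2*b+1)*(2*r+1))"
    "x * (2*a + 1) \<le> 1" "x \<ge> 0" "y * (2*r + 1) \<le> 1" "y \<ge> 0"
    "z * (2*b + 1) \<le> 1" "z \<ge> 0" "w * (4*N + 1) \<ge> 1" "w > 0"
  shows "M * (x*y*z) \<le> 4 * (w * (2*N+1)^2)"
proof -
  have xyz: "x*y*z \<ge> 0" using assms by simp
  have "M * (x*y*z) \<le> (((2*a+1)*(2*r+1)) * ((2*b+1)*(2*r+1))) * (x*y*z)"
    using assms(5) xyz by (rule mult_right_mono)
  also have "\<dots> = (x * (2*a + 1)) * (y * (2*r + 1)) * (z * (2*b + 1)) * (2*r+1)"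
    by (simp add: algebra_simps)
  also have "\<dots> \<le> 1 * 1 * 1 * (2*r+1)"
  proof (rule mult_right_mono)
    have "(x * (2*a + 1)) * (y * (2*r + 1)) \<le> 1 * 1"
      using assms by (intro mult_mono) simp_all
    then show "(x * (2*a + 1)) * (y * (2*r + 1)) * (z * (2*b + 1)) \<le> 1 * 1 * 1"
      using assms by (intro mult_mono) simp_all
  qed (use assms in simp)
  also have "\<dots> \<le> 4 * (w * (2*N+1)^2)"
  proof -
    have "(2*r+1) * (4*N + 1) \<le> 4 * (2*N+1)^2" using assms by (intro aux_r)
    also have "\<dots> = 4 * (2*N+1)^2 * 1" by simp
    also have "\<dots> \<le> 4 * (2*N+1)^2 * (w * (4*N + 1))"
      using assms by (intro mult_left_mono) simp_all
    finally have "(2*r+1) * (4*N + 1) \<le> (4 * (w * (2*N+1)^2)) * (4*N + 1)"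
      by (simp add: algebra_simps)
    moreover have "4*N+1 > 0" using assms by simp
    ultimately show ?thesis by simp
  qed
  finally show ?thesis .
qed

lemma B_bound: "Bmn (a+r) (b+r) r \<le> 2"
proof -
  define N where "N = a+b+r"
  define M where "M = (2*real (a+r) + 1) * (2*real (b+r) + 1)"
  define X where "X = P a * P r * P b / (P N * (2*real N + 1))"
  have Mpos: "M > 0" unfolding M_def by simp
  have B: "Bmn (a+r) (b+r) r = sqrt M * X" unfolding M_def X_def N_def by (rule B_form)
  have M1: "2*real (a+r) + 1 \<le> (2*real a+1)*(2*real r+1)" by (simp add: algebra_simps)
  have M2: "2*real (b+r) + 1 \<le> (2*real b+1)*(2*real r+1)" by (simp add: algebra_simps)
  have Mle: "M \<le> ((2*real a+1)*(2*real r+1)) * ((2*real b+1)*(2*real r+1))"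
    unfolding M_def using M1 M2 by (intro mult_mono) simp_all
  define x where "x = P a ^ 2" define y where "y = P r ^ 2" define z where "z = P b ^ 2"
  define w where "w = P N ^ 2"
  have x: "x * (2*real a + 1) \<le> 1" "x \<ge> 0" unfolding x_def by (rule P_upper) simp
  have y: "y * (2*real r + 1) \<le> 1" "y \<ge> 0" unfolding y_def by (rule P_upper) simp
  have z: "z * (2*real b + 1) \<le> 1" "z \<ge> 0" unfolding z_def by (rule P_upper) simp
  have w1: "w * (4*real N + 1) \<ge> 1" unfolding w_def by (rule P_lower)
  have w2: "w > 0" unfolding w_def using P_pos[of N] by simp
  have X2: "X^2 = x*y*z / (w * (2*real N+1)^2)"
    unfolding X_def x_def y_def z_def w_def by (simp only: power_mult_distrib power_divide)
  have rN: "real r \<le> real N" unfolding N_def by simp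
  have key: "M * (x*y*z) \<le> 4 * (w * (2*real N+1)^2)"
    using Mle x y z w1 w2 rN by (intro aux_fin) simp_all
  have "(sqrt M * X)^2 = M * X^2" using Mpos by (simp add: power_mult_distrib)
  also have "\<dots> = M * (x*y*z) / (w * (2*real N+1)^2)" unfolding X2 by simp
  also have "\<dots> \<le> 4"
  proof -
    have "w * (2*real N+1)^2 > 0" using w2 by simp
    then show ?thesis using key by (simp add: divide_le_eq)
  qed
  finally have "(sqrt M * X)^2 \<le> 2^2" by simp
  then have "sqrt M * X \<le> 2" by (rule power2_le_imp_le) simp
  then show ?thesis using B by simp
qed

theorem mainTheorem1:
  shows "\<exists>C::real. C > 0 \<and> (\<forall>m n r::nat. r \<le> min m n \<longrightarrow> Bmn m n r \<le> C)"
proof (intro exI[of _ 2] conjI allI impI)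
  fix m n r :: nat assume "r \<le> min m n"
  then obtain a b where "m = a + r" "n = b + r"
    by (metis add.commute le_add_diff_inverse min.bounded_iff)
  then show "Bmn m n r \<le> 2" using B_bound by simp
qed simp

end
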